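(* Let $\mathbf X=\{X_n\}$ and $\mathbf Y=\{Y_n\}$ be general sources. If $\mathbf X$ is an approximating source for $\mathbf Y$, then $$\inf_{0<\epsilon<1}\ \liminf_{n\to\infty}\ \inf_{0\le\delta<1-\epsilon}\{c_n^x(\delta+\epsilon)-c_n^y(\delta)\}\ \ge 0 .$$
   Context: Logarithms are natural. A general source $\mathbf X=\{X_n\}_{n\ge1}$ is a sequence of random variables, $X_n$ taking values in a countable set $\mathcal X_n$, with no consistency requirements between different $n$. Similarly $Y_n$ takes values in a countable set $\mathcal Y_n$. For a random variable $Z$ on a countable set $\mathcal Z$ with pmf $P_Z$, list the elements of positive probability as $z_1,z_2,\dots$ (a finite or countably infinite list) with $P_Z(z_1)\ge P_Z(z_2)\ge\cdots$ (ties broken arbitrarily). Set $\delta_0=0$ and $\delta_k=\sum_{i\le k}P_Z(z_i)$. For $\delta\in[0,1)$ define $c^z(\delta)=\log\frac{1}{P_Z(z_k)}$, where $k$ is the unique index with $\delta\in[\delta_{k-1},\delta_k)$. Here $c_n^x$ and $c_n^y$ denote this function built from $P_{X_n}$ and from $P_{Y_n}$ respectively. The variational distance is $d(P,Q)=\sum_a|P(a)-Q(a)|$. $\mathbf X$ is an approximating source for $\mathbf Y$ if there exist deterministic maps $\phi_n:\mathcal X_n\to\mathcal Y_n$ with $\lim_{n\to\infty}d(P_{Y_n},P_{\phi_n(X_n)})=0$. *)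

theory Defs
  imports "HOL-Probability.Probability"
begin

definition var_dist :: "'a pmf \<Rightarrow> 'a pmf \<Rightarrow> real" where
  "var_dist P Q = (\<Sum>\<^sub>\<infinity>a. \<bar>pmf P a - pmf Q a\<bar>)"

text \<open>The function c(delta): list the support in non-increasing order of probability
  z_1, z_2, ...; with delta_k the partial sums, c(delta) = log (1 / P(z_k)) where
  delta lies in [delta_(k-1), delta_k).  Since ties have equal probabilities, this equals
  log(1/t) for the unique probability value t of the support with
  P{z. P z > t} <= delta < P{z. P z >= t}.\<close>
definition cfun :: "'a pmf \<Rightarrow> real \<Rightarrow> real" where
  "cfun P \<delta> = ln (1 / (THE t. t \<in> pmf P ` set_pmf P
        \<and> measure_pmf.prob P {z. pmf P z > t} \<le> \<delta>
        \<and> \<delta> < measure_pmf.prob P {z. pmf P z \<ge> t}))"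

definition approximating_source :: "(nat \<Rightarrow> 'a pmf) \<Rightarrow> (nat \<Rightarrow> 'b pmf) \<Rightarrow> bool" where
  "approximating_source X Y \<longleftrightarrow>
     (\<exists>\<phi> :: nat \<Rightarrow> 'a \<Rightarrow> 'b. (\<lambda>n. var_dist (Y n) (map_pmf (\<phi> n) (X n))) \<longlonglongrightarrow> 0)"

end

theory Submission
  imports Defs
begin

lemma pmf_ge_finite:
  fixes P :: "'a pmf" assumes "r > 0"
  shows "finite {x. pmf P x \<ge> r}"
proof -
  have "finite {x. pmf P x \<ge> r} \<and> card {x. pmf P x \<ge> r} \<le> nat \<lceil>1/r\<rceil>"
  proof (rule finite_if_finite_subsets_card_bdd)
    fix G assume G: "G \<subseteq> {x. pmf P x \<ge> r}" "finite G"
    have "real (card G) * r = (\<Sum>x\<in>G. r)" by simp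
    also have "\<dots> \<le> (\<Sum>x\<in>G. pmf P x)" using G by (intro sum_mono) auto
    also have "\<dots> = measure_pmf.prob P G" using G by (simp add: measure_measure_pmf_finite)
    also have "\<dots> \<le> 1" by simp
    finally have "real (card G) \<le> 1 / r" using assms by (simp add: field_simps)
    then show "card G \<le> nat \<lceil>1/r\<rceil>" by linarith
  qed
  then show ?thesis by blast
qed

lemma set_pmf_measure1: "measure_pmf.prob P (set_pmf P) = 1"
  by (simp add: measure_pmf.prob_eq_1 AE_measure_pmf)

lemma cfun_exists:
  fixes P :: "'a pmf" assumes "0 \<le> \<delta>" "\<delta> < 1"
  shows "\<exists>t. t \<in> pmf P ` set_pmf P
        \<and> measure_pmf.prob P {z. pmf P z > t} \<le> \<delta>
        \<and> \<delta> < measure_pmf.prob P {z. pmf P z \<ge> t}"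
proof -
  define A where "A k = {z. pmf P z \<ge> 1 / real (Suc k)}" for k
  have inc: "incseq A"
    unfolding A_def incseq_def
    by (auto intro: order_trans[rotated] simp: frac_le)
  have un: "(\<Union>k. A k) = set_pmf P"
  proof
    show "(\<Union>k. A k) \<subseteq> set_pmf P" unfolding A_def
      by (auto simp: set_pmf_iff)
    show "set_pmf P \<subseteq> (\<Union>k. A k)"
    proof
      fix z assume "z \<in> set_pmf P"
      then have p: "pmf P z > 0" by (simp add: pmf_positive)
      obtain k where "1 / real (Suc k) < pmf P z" using reals_Archimedean[OF p] by (auto simp: inverse_eq_divide)
      then show "z \<in> (\<Union>k. A k)" unfolding A_def by (auto intro: less_imp_le)
    qed
  qed
  have "(\<lambda>k. measure_pmf.prob P (A k)) \<longlonglongrightarrow> measure_pmf.prob P (\<Union>k. A k)"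
    by (rule measure_pmf.finite_Lim_measure_incseq) (use inc in auto)
  then have "(\<lambda>k. measure_pmf.prob P (A k)) \<longlonglongrightarrow> 1" using un set_pmf_measure1 by metis
  then have "eventually (\<lambda>k. measure_pmf.prob P (A k) > \<delta>) sequentially"
    using assms(2) by (simp add: order_tendsto_iff)
  then obtain k where k: "measure_pmf.prob P (A k) > \<delta>" by (auto simp: eventually_sequentially)
  define r where "r = 1 / real (Suc k)"
  have r0: "r > 0" unfolding r_def by simp
  have Ak: "A k = {z. pmf P z \<ge> r}" unfolding A_def r_def by simp
  have finA: "finite (A k)" using Ak pmf_ge_finite[OF r0] by simp
  have "A k \<noteq> {}" using k assms(1) by auto
  define S where "S = {t \<in> pmf P ` set_pmf P. t \<ge> r \<and> \<delta> < measure_pmf.prob P {z. pmf P z \<ge> t}}"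
  have finS: "finite S"
    by (rule finite_subset[of _ "pmf P ` {z. pmf P z \<ge> r}"]) (auto simp: S_def pmf_ge_finite[OF r0])
  define t0 where "t0 = Min (pmf P ` A k)"
  have t0A: "t0 \<in> pmf P ` A k" unfolding t0_def using finA \<open>A k \<noteq> {}\<close> by (intro Min_in) auto
  have "t0 \<in> S"
  proof -
    have "A k \<subseteq> {z. pmf P z \<ge> t0}" unfolding t0_def using finA by auto
    then have "measure_pmf.prob P (A k) \<le> measure_pmf.prob P {z. pmf P z \<ge> t0}"
      by (rule measure_pmf.finite_measure_mono) simp
    moreover have "t0 \<ge> r" using t0A Ak by auto
    moreover have "t0 \<in> pmf P ` set_pmf P" using t0A Ak r0
      by (auto simp: set_pmf_iff)
    ultimately show ?thesis using k S_def by auto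
  qed
  then have Sne: "S \<noteq> {}" by auto
  define t where "t = Max S"
  have tS: "t \<in> S" unfolding t_def using finS Sne by (rule Max_in)
  have tmax: "\<And>t'. t' \<in> S \<Longrightarrow> t' \<le> t" unfolding t_def using finS by auto
  have "measure_pmf.prob P {z. pmf P z > t} \<le> \<delta>"
  proof (rule ccontr)
    assume c: "\<not> ?thesis"
    define G where "G = {z. pmf P z > t}"
    have tr: "t \<ge> r" using tS S_def by auto
    have finG: "finite G" by (rule finite_subset[OF _ pmf_ge_finite[OF r0, of P]]) (use tr in \<open>auto simp: G_def\<close>)
    have "G \<noteq> {}" using c assms(1) G_def by auto
    define t' where "t' = Min (pmf P ` G)"
    have t'G: "t' \<in> pmf P ` G" unfolding t'_def using finG \<open>G \<noteq> {}\<close> by (intro Min_in) auto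
    have t't: "t' > t" using t'G G_def by auto
    have eq: "{z. pmf P z \<ge> t'} = G"
      using t't finG by (auto simp: G_def t'_def)
    have "t' \<in> S" using t'G t't tr c eq r0 unfolding S_def G_def
      by (auto simp: set_pmf_iff)
    then show False using tmax t't by fastforce
  qed
  then show ?thesis using tS S_def by auto
qed

lemma cfun_spec:
  fixes P :: "'a pmf" assumes "0 \<le> \<delta>" "\<delta> < 1"
  obtains t where "t \<in> pmf P ` set_pmf P"
        "measure_pmf.prob P {z. pmf P z > t} \<le> \<delta>"
        "\<delta> < measure_pmf.prob P {z. pmf P z \<ge> t}"
        "cfun P \<delta> = ln (1 / t)"
proof -
  let ?Q = "\<lambda>t. t \<in> pmf P ` set_pmf P
        \<and> measure_pmf.prob P {z. pmf P z > t} \<le> \<delta>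
        \<and> \<delta> < measure_pmf.prob P {z. pmf P z \<ge> t}"
  have uniq: "t1 = t2" if "?Q t1" "?Q t2" for t1 t2
  proof (rule ccontr)
    assume "t1 \<noteq> t2"
    then consider "t1 < t2" | "t2 < t1" by linarith
    then show False
    proof cases
      case 1
      have "measure_pmf.prob P {z. pmf P z \<ge> t2} \<le> measure_pmf.prob P {z. pmf P z > t1}"
        by (rule measure_pmf.finite_measure_mono) (use 1 in auto)
      then show False using that by linarith
    next
      case 2
      have "measure_pmf.prob P {z. pmf P z \<ge> t1} \<le> measure_pmf.prob P {z. pmf P z > t2}"
        by (rule measure_pmf.finite_measure_mono) (use 2 in auto)
      then show False using that by linarith
    qed
  qed
  have ex1: "\<exists>!t. ?Q t" using cfun_exists[OF assms] uniq by blast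
  have "?Q (THE t. ?Q t)" by (rule theI'[OF ex1])
  moreover have "cfun P \<delta> = ln (1 / (THE t. ?Q t))" by (simp add: cfun_def)
  ultimately show ?thesis using that by blast
qed


lemma pmf_summable: "pmf P summable_on A"
proof -
  have "Infinite_Sum.abs_summable_on (pmf P) A"
    using abs_summable_equivalent pmf_abs_summable by blast
  then show ?thesis by simp
qed

lemma absdiff_summable: "(\<lambda>a. \<bar>pmf P a - pmf Q a\<bar>) summable_on A"
proof (rule summable_on_comparison_test)
  show "(\<lambda>a. pmf P a + pmf Q a) summable_on A"
    by (intro summable_on_add pmf_summable)
qed (auto simp: abs_le_iff)

lemma key:
  fixes X :: "'a pmf" and Y :: "'b pmf" and \<phi> :: "'a \<Rightarrow> 'b"
  assumes eps: "\<epsilon> > 0"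
  and s: "s \<in> pmf X ` set_pmf X" "\<delta> + \<epsilon> < measure_pmf.prob X {z. pmf X z \<ge> s}"
  and t: "t \<in> pmf Y ` set_pmf Y" "measure_pmf.prob Y {z. pmf Y z > t} \<le> \<delta>"
  shows "\<epsilon> * (s - t) \<le> s * var_dist Y (map_pmf \<phi> X)"
proof -
  define Z where "Z = map_pmf \<phi> X"
  define d where "d = var_dist Y Z"
  have s0: "s > 0" using s(1) by (auto simp: pmf_positive)
  have t0: "t > 0" using t(1) by (auto simp: pmf_positive)
  have d0: "d \<ge> 0" unfolding d_def var_dist_def by (rule infsum_nonneg) simp
  define A where "A = {z. pmf X z \<ge> s}"
  have finA: "finite A" unfolding A_def using pmf_ge_finite[OF s0] .
  define B where "B = \<phi> ` A"
  have finB: "finite B" unfolding B_def using finA by simp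
  have Bs: "pmf Z y \<ge> s" if yB: "y \<in> B" for y
  proof -
    obtain x where x: "x \<in> A" "y = \<phi> x" using yB unfolding B_def by auto
    have "pmf X x = measure_pmf.prob X {x}" by (simp add: measure_pmf_single)
    also have "\<dots> \<le> measure_pmf.prob X (\<phi> -` {y})"
      by (rule measure_pmf.finite_measure_mono) (use x in auto)
    also have "\<dots> = pmf Z y" by (simp add: Z_def pmf_map)
    finally show ?thesis using x A_def by auto
  qed
  have ZB: "measure_pmf.prob Z B > \<delta> + \<epsilon>"
  proof -
    have "measure_pmf.prob X A \<le> measure_pmf.prob X (\<phi> -` B)"
      by (rule measure_pmf.finite_measure_mono) (auto simp: B_def)
    then show ?thesis using s(2) by (simp add: Z_def A_def)
  qed
  have ZBsum: "measure_pmf.prob Z B = (\<Sum>y\<in>B. pmf Z y)" using finB by (simp add: measure_measure_pmf_finite)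
  have Bd: "(\<Sum>y\<in>B. \<bar>pmf Y y - pmf Z y\<bar>) \<le> d"
  proof -
    have "(\<Sum>y\<in>B. \<bar>pmf Y y - pmf Z y\<bar>) = infsum (\<lambda>y. \<bar>pmf Y y - pmf Z y\<bar>) B"
      using finB by simp
    also have "\<dots> \<le> infsum (\<lambda>y. \<bar>pmf Y y - pmf Z y\<bar>) UNIV"
      by (rule infsum_mono_neutral) (auto intro: absdiff_summable)
    finally show ?thesis by (simp add: d_def var_dist_def)
  qed
  show ?thesis
  proof (cases "s \<le> t")
    case True
    then have "\<epsilon> * (s - t) \<le> 0" using eps by (simp add: mult_nonneg_nonpos)
    also have "0 \<le> s * d" using s0 d0 by simp
    finally show ?thesis by (simp add: d_def Z_def)
  next
    case False
    then have st: "s - t > 0" by simp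
    define C where "C = B \<inter> {y. pmf Y y > t}"
    define D where "D = B - C"
    have finC: "finite C" "finite D" using finB by (auto simp: C_def D_def)
    have BCD: "B = C \<union> D" "C \<inter> D = {}" by (auto simp: C_def D_def)
    have sumB: "sum f B = sum f C + sum f D" for f :: "'b \<Rightarrow> real"
      using BCD finC by (simp add: sum.union_disjoint)
    have YC: "(\<Sum>y\<in>C. pmf Y y) \<le> \<delta>"
    proof -
      have "(\<Sum>y\<in>C. pmf Y y) = measure_pmf.prob Y C" using finC by (simp add: measure_measure_pmf_finite)
      also have "\<dots> \<le> measure_pmf.prob Y {z. pmf Y z > t}"
        by (rule measure_pmf.finite_measure_mono) (auto simp: C_def)
      finally show ?thesis using t(2) by simp
    qed
    have ZC: "(\<Sum>y\<in>C. pmf Z y) \<le> \<delta> + (\<Sum>y\<in>C. \<bar>pmf Y y - pmf Z y\<bar>)"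
    proof -
      have "(\<Sum>y\<in>C. pmf Z y) \<le> (\<Sum>y\<in>C. pmf Y y + \<bar>pmf Y y - pmf Z y\<bar>)"
        by (intro sum_mono) linarith
      then show ?thesis using YC by (simp add: sum.distrib)
    qed
    have ZD: "(s - t) * (\<Sum>y\<in>D. pmf Z y) \<le> s * (\<Sum>y\<in>D. \<bar>pmf Y y - pmf Z y\<bar>)"
    proof -
      have "(s - t) * pmf Z y \<le> s * \<bar>pmf Y y - pmf Z y\<bar>" if "y \<in> D" for y
      proof -
        have yB: "pmf Z y \<ge> s" using that Bs D_def by auto
        have yt: "pmf Y y \<le> t" using that by (auto simp: D_def C_def)
        have "s * t \<le> pmf Z y * t" using yB t0 by (simp add: mult_right_mono)
        moreover have "s * pmf Y y \<le> s * t" using yt s0 by (simp add: mult_left_mono)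
        moreover have "pmf Z y - pmf Y y \<le> \<bar>pmf Y y - pmf Z y\<bar>" by linarith
        then have "s * (pmf Z y - pmf Y y) \<le> s * \<bar>pmf Y y - pmf Z y\<bar>" using s0 by (simp add: mult_left_mono)
        ultimately show ?thesis by (simp add: algebra_simps)
      qed
      then have "(\<Sum>y\<in>D. (s - t) * pmf Z y) \<le> (\<Sum>y\<in>D. s * \<bar>pmf Y y - pmf Z y\<bar>)"
        by (intro sum_mono) auto
      then show ?thesis by (simp add: sum_distrib_left)
    qed
    have absC: "(s - t) * (\<Sum>y\<in>C. \<bar>pmf Y y - pmf Z y\<bar>) \<le> s * (\<Sum>y\<in>C. \<bar>pmf Y y - pmf Z y\<bar>)"
      using t0 by (intro mult_right_mono) (auto intro: sum_nonneg)
    have "(s - t) * (\<delta> + \<epsilon>) < (s - t) * (\<Sum>y\<in>B. pmf Z y)"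
      using ZB ZBsum st by simp
    also have "\<dots> = (s - t) * (\<Sum>y\<in>C. pmf Z y) + (s - t) * (\<Sum>y\<in>D. pmf Z y)"
      by (simp add: sumB algebra_simps)
    also have "\<dots> \<le> (s - t) * (\<delta> + (\<Sum>y\<in>C. \<bar>pmf Y y - pmf Z y\<bar>)) + s * (\<Sum>y\<in>D. \<bar>pmf Y y - pmf Z y\<bar>)"
      using ZC ZD st by (intro add_mono mult_left_mono) auto
    also have "\<dots> \<le> (s - t) * \<delta> + s * (\<Sum>y\<in>B. \<bar>pmf Y y - pmf Z y\<bar>)"
      using absC by (simp add: sumB algebra_simps)
    also have "\<dots> \<le> (s - t) * \<delta> + s * d"
      using Bd s0 by (simp add: mult_left_mono)
    finally have "(s - t) * \<epsilon> < s * d" by (simp add: algebra_simps)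
    then show ?thesis by (simp add: d_def Z_def algebra_simps)
  qed
qed


lemma pointwise:
  fixes X :: "'a pmf" and Y :: "'b pmf" and \<phi> :: "'a \<Rightarrow> 'b"
  assumes eps: "0 < \<epsilon>" and d: "var_dist Y (map_pmf \<phi> X) < \<epsilon>"
  and del: "0 \<le> \<delta>" "\<delta> < 1 - \<epsilon>"
  shows "ln (1 - var_dist Y (map_pmf \<phi> X) / \<epsilon>) \<le> cfun X (\<delta> + \<epsilon>) - cfun Y \<delta>"
proof -
  define d where "d = var_dist Y (map_pmf \<phi> X)"
  obtain s where s: "s \<in> pmf X ` set_pmf X" "measure_pmf.prob X {z. pmf X z > s} \<le> \<delta> + \<epsilon>"
     "\<delta> + \<epsilon> < measure_pmf.prob X {z. pmf X z \<ge> s}" "cfun X (\<delta> + \<epsilon>) = ln (1 / s)"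
    using cfun_spec[of "\<delta> + \<epsilon>" X] del eps by auto
  obtain t where t: "t \<in> pmf Y ` set_pmf Y" "measure_pmf.prob Y {z. pmf Y z > t} \<le> \<delta>"
     "\<delta> < measure_pmf.prob Y {z. pmf Y z \<ge> t}" "cfun Y \<delta> = ln (1 / t)"
    using cfun_spec[of "\<delta>" Y] del eps by auto
  have s0: "s > 0" using s(1) by (auto simp: pmf_positive)
  have t0: "t > 0" using t(1) by (auto simp: pmf_positive)
  have k: "\<epsilon> * (s - t) \<le> s * d" unfolding d_def by (rule key[OF eps s(1,3) t(1,2)])
  have pos: "0 < 1 - d / \<epsilon>" using d eps by (simp add: d_def field_simps)
  have le: "1 - d / \<epsilon> \<le> t / s" using k eps s0 by (simp add: field_simps)
  have "ln (1 - d / \<epsilon>) \<le> ln (t / s)" using pos le by simp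
  also have "\<dots> = ln (1 / s) - ln (1 / t)" using s0 t0 by (simp add: ln_div)
  finally show ?thesis using s(4) t(4) by (simp add: d_def)
qed

theorem theorem2:
  fixes X :: "nat \<Rightarrow> 'a pmf" and Y :: "nat \<Rightarrow> 'b pmf"
  assumes "approximating_source X Y"
  shows "(INF \<epsilon>\<in>{0<..<1::real}. liminf (\<lambda>n.
            INF \<delta>\<in>{0..<1 - \<epsilon>}. ereal (cfun (X n) (\<delta> + \<epsilon>) - cfun (Y n) \<delta>))) \<ge> 0"
proof (rule INF_greatest)
  fix \<epsilon> :: real assume "\<epsilon> \<in> {0<..<1}"
  then have eps: "0 < \<epsilon>" by simp
  obtain \<phi> :: "nat \<Rightarrow> 'a \<Rightarrow> 'b" where lim: "(\<lambda>n. var_dist (Y n) (map_pmf (\<phi> n) (X n))) \<longlonglongrightarrow> 0"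
    using assms unfolding approximating_source_def by blast
  define d where "d n = var_dist (Y n) (map_pmf (\<phi> n) (X n))" for n
  have ev: "eventually (\<lambda>n. d n < \<epsilon>) sequentially"
    using lim eps unfolding d_def by (simp add: order_tendsto_iff)
  have glim: "(\<lambda>n. ereal (ln (1 - d n / \<epsilon>))) \<longlonglongrightarrow> ereal 0"
  proof -
    have "(\<lambda>n. 1 - d n / \<epsilon>) \<longlonglongrightarrow> 1 - 0 / \<epsilon>"
      using lim unfolding d_def using eps by (intro tendsto_intros) auto
    then have "(\<lambda>n. ln (1 - d n / \<epsilon>)) \<longlonglongrightarrow> ln 1"
      by (intro tendsto_ln) auto
    then show ?thesis by (intro tendsto_ereal) simp
  qed
  have "0 = liminf (\<lambda>n. ereal (ln (1 - d n / \<epsilon>)))"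
    using lim_imp_Liminf[OF trivial_limit_sequentially glim] by (simp add: zero_ereal_def)
  also have "\<dots> \<le> liminf (\<lambda>n. INF \<delta>\<in>{0..<1 - \<epsilon>}. ereal (cfun (X n) (\<delta> + \<epsilon>) - cfun (Y n) \<delta>))"
  proof (rule Liminf_mono)
    show "eventually (\<lambda>n. ereal (ln (1 - d n / \<epsilon>)) \<le> (INF \<delta>\<in>{0..<1 - \<epsilon>}. ereal (cfun (X n) (\<delta> + \<epsilon>) - cfun (Y n) \<delta>))) sequentially"
      using ev
    proof (rule eventually_mono)
      fix n assume "d n < \<epsilon>"
      then show "ereal (ln (1 - d n / \<epsilon>)) \<le> (INF \<delta>\<in>{0..<1 - \<epsilon>}. ereal (cfun (X n) (\<delta> + \<epsilon>) - cfun (Y n) \<delta>))"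
        using pointwise[OF eps, of "Y n" "\<phi> n" "X n"] unfolding d_def
        by (intro INF_greatest) auto
    qed
  qed
  finally show "0 \<le> liminf (\<lambda>n. INF \<delta>\<in>{0..<1 - \<epsilon>}. ereal (cfun (X n) (\<delta> + \<epsilon>) - cfun (Y n) \<delta>))" .
qed

end
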